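(* For the wound-string system of the context with parameters $(a,C,m)=(\tfrac12,1,-1)$, the fixed points are exactly the four points $(x_1,x_2)\in\{(2,1),(2,-1),(-2,1),(-2,-1)\}$. At each of them, the deviation equations $\ddot\xi_i+2N^i_j\dot\xi_j+2\frac{\partial G^i}{\partial x_j}\xi_j=0$ (coefficients evaluated at $(x,y)=(\bar x,0)$) reduce to $\ddot\xi_1+\tfrac14\xi_1=0$, $\ddot\xi_2+\tfrac14\xi_2=0$; with $\xi(0)=0$, $\dot\xi(0)=(\xi_{10},\xi_{20})\ne0$ the solution is $\xi_i(t)=2\xi_{i0}\sin(t/2)$, so $\frac{\xi_1(t)^2+\xi_2(t)^2}{\xi_{10}^2+\xi_{20}^2}=4\sin^2(t/2)<t^2$ for small $t>0$, and all four fixed points are Jacobi stable (the deviation curvature tensor there equals $-\tfrac14 I_2$).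
   Context: Wound-string system: $\ddot x_1+2G^1=0$, $\ddot x_2+2G^2=0$, $y_i=\dot x_i$, with $G^1=\frac{x_1}{2a^2x_1^2+2m^2x_2^2}\big[a^2(1-y_1^2)-y_2^2-C^2\frac{(a^2x_1^2+m^2x_2^2)^2}{x_1^4x_2^2}\big]$, $G^2=\frac{x_2}{2a^2x_1^2+2m^2x_2^2}\big[m^2(a^2(1-y_1^2)-y_2^2)-a^2C^2\frac{(a^2x_1^2+m^2x_2^2)^2}{x_1^2x_2^4}\big]$. Fixed points: $(x_1,x_2)$ with $x_1x_2\neq0$ and $G^1(x,0)=G^2(x,0)=0$. Einstein summation; $N^i_j=\partial G^i/\partial y_j$, $G^i_{j\ell}=\partial N^i_j/\partial y_\ell$, $P^i_j=-2\frac{\partial G^i}{\partial x_j}-2G^\ell G^i_{j\ell}+y_\ell\frac{\partial N^i_j}{\partial x_\ell}+N^i_\ell N^\ell_j$. Jacobi stable: all eigenvalues of $(P^i_j)$ at $(\bar x,0)$ have strictly negative real parts. *)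

theory Defs
  imports "HOL-Analysis.Analysis"
begin

text \<open>Points (x_1,x_2) and velocities (y_1,y_2) are functions nat => real, only the
  components 1 and 2 being relevant. Einstein sums run over the index set {1,2}.\<close>

definition vec2 :: "real \<Rightarrow> real \<Rightarrow> nat \<Rightarrow> real" where
  "vec2 u v = (\<lambda>i. if i = 1 then u else v)"

definition G1 :: "real \<Rightarrow> real \<Rightarrow> real \<Rightarrow> (nat \<Rightarrow> real) \<Rightarrow> (nat \<Rightarrow> real) \<Rightarrow> real" where
  "G1 a C m x y = x 1 / (2*a^2*(x 1)^2 + 2*m^2*(x 2)^2) *
     (a^2*(1 - (y 1)^2) - (y 2)^2
      - C^2 * (a^2*(x 1)^2 + m^2*(x 2)^2)^2 / ((x 1)^4 * (x 2)^2))"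

definition G2 :: "real \<Rightarrow> real \<Rightarrow> real \<Rightarrow> (nat \<Rightarrow> real) \<Rightarrow> (nat \<Rightarrow> real) \<Rightarrow> real" where
  "G2 a C m x y = x 2 / (2*a^2*(x 1)^2 + 2*m^2*(x 2)^2) *
     (m^2*(a^2*(1 - (y 1)^2) - (y 2)^2)
      - a^2 * C^2 * (a^2*(x 1)^2 + m^2*(x 2)^2)^2 / ((x 1)^2 * (x 2)^4))"

definition Gf :: "real \<Rightarrow> real \<Rightarrow> real \<Rightarrow> nat \<Rightarrow> (nat \<Rightarrow> real) \<Rightarrow> (nat \<Rightarrow> real) \<Rightarrow> real" where
  "Gf a C m i x y = (if i = 1 then G1 a C m x y else G2 a C m x y)"

definition pd :: "((nat \<Rightarrow> real) \<Rightarrow> real) \<Rightarrow> (nat \<Rightarrow> real) \<Rightarrow> nat \<Rightarrow> real" where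
  "pd f v j = deriv (\<lambda>t. f (v(j := t))) (v j)"

definition Nc :: "real \<Rightarrow> real \<Rightarrow> real \<Rightarrow> nat \<Rightarrow> nat \<Rightarrow> (nat \<Rightarrow> real) \<Rightarrow> (nat \<Rightarrow> real) \<Rightarrow> real" where
  "Nc a C m i j x y = pd (\<lambda>y'. Gf a C m i x y') y j"

definition Gc :: "real \<Rightarrow> real \<Rightarrow> real \<Rightarrow> nat \<Rightarrow> nat \<Rightarrow> nat \<Rightarrow> (nat \<Rightarrow> real) \<Rightarrow> (nat \<Rightarrow> real) \<Rightarrow> real" where
  "Gc a C m i j l x y = pd (\<lambda>y'. Nc a C m i j x y') y l"

definition dGx :: "real \<Rightarrow> real \<Rightarrow> real \<Rightarrow> nat \<Rightarrow> nat \<Rightarrow> (nat \<Rightarrow> real) \<Rightarrow> (nat \<Rightarrow> real) \<Rightarrow> real" where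
  "dGx a C m i j x y = pd (\<lambda>x'. Gf a C m i x' y) x j"

definition Pc :: "real \<Rightarrow> real \<Rightarrow> real \<Rightarrow> nat \<Rightarrow> nat \<Rightarrow> (nat \<Rightarrow> real) \<Rightarrow> (nat \<Rightarrow> real) \<Rightarrow> real" where
  "Pc a C m i j x y =
     - 2 * dGx a C m i j x y
     - 2 * (\<Sum>l\<in>{1,2}. Gf a C m l x y * Gc a C m i j l x y)
     + (\<Sum>l\<in>{1,2}. y l * pd (\<lambda>x'. Nc a C m i j x' y) x l)
     + (\<Sum>l\<in>{1,2}. Nc a C m i l x y * Nc a C m l j x y)"

definition zero2 :: "nat \<Rightarrow> real" where "zero2 = (\<lambda>_. 0)"

definition fixed_point :: "real \<Rightarrow> real \<Rightarrow> real \<Rightarrow> real \<Rightarrow> real \<Rightarrow> bool" where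
  "fixed_point a C m x1 x2 \<longleftrightarrow> x1 * x2 \<noteq> 0 \<and>
     Gf a C m 1 (vec2 x1 x2) zero2 = 0 \<and> Gf a C m 2 (vec2 x1 x2) zero2 = 0"

definition is_eigenvalue2 :: "(nat \<Rightarrow> nat \<Rightarrow> real) \<Rightarrow> complex \<Rightarrow> bool" where
  "is_eigenvalue2 M z \<longleftrightarrow>
     (complex_of_real (M 1 1) - z) * (complex_of_real (M 2 2) - z)
       - complex_of_real (M 1 2) * complex_of_real (M 2 1) = 0"

definition jacobi_stable :: "real \<Rightarrow> real \<Rightarrow> real \<Rightarrow> real \<Rightarrow> real \<Rightarrow> bool" where
  "jacobi_stable a C m x1 x2 \<longleftrightarrow>
     (\<forall>z. is_eigenvalue2 (\<lambda>i j. Pc a C m i j (vec2 x1 x2) zero2) z \<longrightarrow> Re z < 0)"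

end

theory Submission imports Defs begin

lemma pd_eq: "((\<lambda>t. f (v(j:=t))) has_real_derivative D) (at (v j)) \<Longrightarrow> pd f v j = D"
  unfolding pd_def by (rule DERIV_imp_deriv)

lemma Nc0:
  assumes "j \<in> {1,2}" "i \<in> {1,2}" "x1 \<noteq> 0"
  shows "Nc (1/2) 1 (-1) i j (vec2 x1 x2) zero2 = 0"
  unfolding Nc_def
proof (rule pd_eq)
  show "((\<lambda>t. Gf (1/2) 1 (-1) i (vec2 x1 x2) (zero2(j:=t))) has_real_derivative 0) (at (zero2 j))"
  proof -
    have "0 < 2*(1/2)^2*(vec2 x1 x2 (Suc 0))^2 + 2*(vec2 x1 x2 2)^2"
      using assms(3) by (intro add_pos_nonneg) (auto simp: vec2_def)
    hence Dn: "2*(1/2)^2*(vec2 x1 x2 (Suc 0))^2 + 2*(vec2 x1 x2 2)^2 \<noteq> (0::real)" by linarith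
    show ?thesis
    using assms Dn
    apply (simp add: zero2_def)
    apply (elim disjE; simp add: Gf_def G1_def G2_def fun_upd_apply)
    apply (auto intro!: derivative_eq_intros)
    done
  qed
qed


lemma dGx_D:
  assumes "(x1,x2) \<in> {(2,1),(2,-1),(-2,1),(-2,-1)}" "i\<in>{1,2}" "j\<in>{1,2}"
  shows "((\<lambda>t. Gf (1/2) 1 (-1) i ((vec2 x1 x2)(j:=t)) zero2) has_real_derivative (if i=j then 1/8 else 0)) (at (vec2 x1 x2 j))"
  using assms
  apply (simp add: Gf_def G1_def G2_def zero2_def vec2_def fun_upd_apply)
  apply (elim disjE conjE; simp)
  apply (auto intro!: derivative_eq_intros simp: G1_def G2_def fun_upd_apply power2_eq_square field_simps)
  done

lemma fp_dir:
  assumes "fixed_point (1/2) 1 (-1) x1 x2"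
  shows "(x1, x2) \<in> {(2, 1), (2, -1), (-2, 1), (-2, -1 :: real)}"
proof -
  have nz: "x1 \<noteq> 0" "x2 \<noteq> 0" using assms by (auto simp: fixed_point_def)
  define uu where "uu = x1^2"
  define vv where "vv = x2^2"
  have up: "uu > 0" "vv > 0" using nz by (auto simp: uu_def vv_def)
  have "0 < 2*(1/2)^2*x1^2 + 2*(-1)^2*x2^2" using nz by (intro add_pos_pos) auto
  hence D: "2*(1/2)^2*x1^2 + 2*(-1)^2*x2^2 \<noteq> (0::real)" by linarith
  have "G1 (1/2) 1 (-1) (vec2 x1 x2) zero2 = 0" using assms by (simp add: fixed_point_def Gf_def)
  hence "(1/2)^2*(1 - 0^2) - 0^2 - 1^2 * ((1/2)^2*x1^2 + (-1)^2*x2^2)^2 / (x1^4*x2^2) = (0::real)"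
    using nz D by (simp add: G1_def vec2_def zero2_def)
  hence e1: "(uu/4+vv)^2 = uu^2* vv/4" using nz
    by (simp add: uu_def vv_def field_simps power2_eq_square power4_eq_xxxx)
  have "G2 (1/2) 1 (-1) (vec2 x1 x2) zero2 = 0" using assms by (simp add: fixed_point_def Gf_def)
  hence "(-1)^2*((1/2)^2*(1 - 0^2) - 0^2) - (1/2)^2 * 1^2 * ((1/2)^2*x1^2 + (-1)^2*x2^2)^2 / (x1^2*x2^4) = (0::real)"
    using nz D by (simp add: G2_def vec2_def zero2_def)
  hence e2: "(uu/4+vv)^2 = uu * vv^2" using nz
    by (simp add: uu_def vv_def field_simps power2_eq_square power4_eq_xxxx)
  have e3: "uu^2 * vv/4 = uu * vv^2" using e1 e2 by simp
  have "uu * vv * (uu - 4 * vv) = 4 * (uu^2 * vv/4 - uu * vv^2)" by (simp add: algebra_simps power2_eq_square)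
  hence "uu * vv * (uu - 4 * vv) = 0" using e3 by simp
  hence uv: "uu = 4* vv" using up by simp
  have "(4* vv/4+vv)^2 = 4 * vv * vv^2" using e2 unfolding uv .
  hence "vv * vv * (4* vv - 4) = 0" by (simp add: algebra_simps power2_eq_square)
  hence "vv = 1" using up by simp
  hence "x2^2 = 1^2" "x1^2 = 2^2" using uv by (auto simp: uu_def vv_def)
  hence "(x2 = 1 \<or> x2 = -1)" "(x1 = 2 \<or> x1 = -2)" by (simp_all only: power2_eq_iff)
  thus ?thesis by auto
qed

lemma fp_iff:
  "fixed_point (1/2) 1 (-1) x1 x2 \<longleftrightarrow> (x1, x2) \<in> {(2, 1), (2, -1), (-2, 1), (-2, -1 :: real)}"
proof
  assume "(x1, x2) \<in> {(2, 1), (2, -1), (-2, 1), (-2, -1 :: real)}"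
  thus "fixed_point (1/2) 1 (-1) x1 x2"
    by (elim insertE emptyE; simp add: fixed_point_def Gf_def G1_def G2_def vec2_def zero2_def power2_eq_square)
qed (rule fp_dir)

lemma ode_unique:
  fixes f f' f'' :: "real \<Rightarrow> real"
  assumes d1: "\<And>t. (f has_real_derivative f' t) (at t)"
    and d2: "\<And>t. (f' has_real_derivative f'' t) (at t)"
    and eq: "\<And>t. f'' t = - f t / 4" and i0: "f 0 = 0" "f' 0 = c"
  shows "f t = 2*c* sin (t/2)"
proof -
  define E where "E t = (f' t - c*cos (t/2))^2 + (f t - 2*c* sin (t/2))^2/4" for t
  have "\<forall>t. (E has_real_derivative 0) (at t)"
  proof
    fix t
    have "(E has_real_derivative
       2*(f' t - c*cos (t/2))*(f'' t + c* sin (t/2)/2) + 2*(f t - 2*c* sin (t/2))*(f' t - c*cos(t/2))/4) (at t)"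
      unfolding E_def[abs_def]
      by (auto intro!: derivative_eq_intros d1 d2 simp: field_simps; (simp add: divide_simps algebra_simps)?)
    moreover have "2*(f' t - c*cos (t/2))*(f'' t + c* sin (t/2)/2) + 2*(f t - 2*c* sin (t/2))*(f' t - c*cos(t/2))/4 = 0"
      unfolding eq by (simp add: field_simps)
    ultimately show "(E has_real_derivative 0) (at t)" by simp
  qed
  hence "E t = E 0" by (rule DERIV_isconst_all)
  also have "E 0 = 0" by (simp add: E_def i0)
  finally have E0: "E t = 0" .
  have "(f t - 2*c* sin (t/2))^2/4 \<le> E t" unfolding E_def by simp
  hence "(f t - 2*c* sin (t/2))^2 \<le> 0" using E0 by simp
  thus ?thesis by simp
qed

lemma sin_sq_less: assumes "0 < t" "t < 1" shows "4 * (sin (t/2))^2 < (t::real)^2"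
proof -
  have s: "sin (t/2) = 2 * sin (t/4) * cos (t/4)"
    using sin_double[of "t/4"] by simp
  have "t/4 < pi/2" using assms pi_gt3 by linarith
  hence sp: "0 < sin (t/4)" using assms by (intro sin_gt_zero2) auto
  have c1: "(cos (t/4))^2 < 1" proof -
    have "0 < (sin (t/4))^2" using sp by simp
    thus ?thesis using sin_cos_squared_add[of "t/4"] by linarith
  qed
  have sl: "sin (t/4) \<le> t/4" using abs_sin_x_le_abs_x[of "t/4"] assms by simp
  have "(sin (t/2))^2 = 4 * (sin (t/4))^2 * (cos (t/4))^2" unfolding s by (simp add: power_mult_distrib)
  also have "\<dots> < 4 * (sin (t/4))^2" using c1 sp by simp
  also have "\<dots> \<le> 4 * (t/4)^2" using sl sp by (simp add: power_mono)
  finally show ?thesis by (simp add: power2_eq_square)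
qed

theorem mainTheorem5:
  shows
  "(\<forall>x1 x2. fixed_point (1/2) 1 (-1) x1 x2 \<longleftrightarrow>
       (x1, x2) \<in> {(2, 1), (2, -1), (-2, 1), (-2, -1)})
   \<and> (\<forall>x1 x2. (x1, x2) \<in> {(2, 1), (2, -1), (-2, 1), (-2, -1 :: real)} \<longrightarrow>
       (\<forall>i\<in>{1,2}. \<forall>j\<in>{1,2}.
          Nc (1/2) 1 (-1) i j (vec2 x1 x2) zero2 = 0
          \<and> 2 * dGx (1/2) 1 (-1) i j (vec2 x1 x2) zero2 = (if i = j then 1/4 else 0)
          \<and> Pc (1/2) 1 (-1) i j (vec2 x1 x2) zero2 = (if i = j then -1/4 else 0))
     \<and> (\<forall>(\<xi> :: nat \<Rightarrow> real \<Rightarrow> real) \<xi>' \<xi>'' \<xi>10 \<xi>20.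
          (\<xi>10, \<xi>20) \<noteq> (0, 0)
          \<and> (\<forall>i\<in>{1,2}. \<forall>t.
               (\<xi> i has_real_derivative \<xi>' i t) (at t)
             \<and> (\<xi>' i has_real_derivative \<xi>'' i t) (at t)
             \<and> \<xi>'' i t
               + 2 * (\<Sum>j\<in>{1,2}. Nc (1/2) 1 (-1) i j (vec2 x1 x2) zero2 * \<xi>' j t)
               + 2 * (\<Sum>j\<in>{1,2}. dGx (1/2) 1 (-1) i j (vec2 x1 x2) zero2 * \<xi> j t) = 0)
          \<and> \<xi> 1 0 = 0 \<and> \<xi> 2 0 = 0 \<and> \<xi>' 1 0 = \<xi>10 \<and> \<xi>' 2 0 = \<xi>20
          \<longrightarrow> (\<forall>t. \<xi> 1 t = 2 * \<xi>10 * sin (t/2) \<and> \<xi> 2 t = 2 * \<xi>20 * sin (t/2))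
            \<and> (\<forall>t. ((\<xi> 1 t)^2 + (\<xi> 2 t)^2) / (\<xi>10^2 + \<xi>20^2) = 4 * (sin (t/2))^2)
            \<and> (\<exists>\<delta>>0. \<forall>t. 0 < t \<and> t < \<delta> \<longrightarrow>
                 ((\<xi> 1 t)^2 + (\<xi> 2 t)^2) / (\<xi>10^2 + \<xi>20^2) < t^2))
     \<and> jacobi_stable (1/2) 1 (-1) x1 x2)"
proof -
  have part2: "(\<forall>i\<in>{1,2}. \<forall>j\<in>{1,2}.
          Nc (1/2) 1 (-1) i j (vec2 x1 x2) zero2 = 0
          \<and> 2 * dGx (1/2) 1 (-1) i j (vec2 x1 x2) zero2 = (if i = j then 1/4 else 0)
          \<and> Pc (1/2) 1 (-1) i j (vec2 x1 x2) zero2 = (if i = j then -1/4 else 0))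
     \<and> (\<forall>(\<xi> :: nat \<Rightarrow> real \<Rightarrow> real) \<xi>' \<xi>'' \<xi>10 \<xi>20.
          (\<xi>10, \<xi>20) \<noteq> (0, 0)
          \<and> (\<forall>i\<in>{1,2}. \<forall>t.
               (\<xi> i has_real_derivative \<xi>' i t) (at t)
             \<and> (\<xi>' i has_real_derivative \<xi>'' i t) (at t)
             \<and> \<xi>'' i t
               + 2 * (\<Sum>j\<in>{1,2}. Nc (1/2) 1 (-1) i j (vec2 x1 x2) zero2 * \<xi>' j t)
               + 2 * (\<Sum>j\<in>{1,2}. dGx (1/2) 1 (-1) i j (vec2 x1 x2) zero2 * \<xi> j t) = 0)
          \<and> \<xi> 1 0 = 0 \<and> \<xi> 2 0 = 0 \<and> \<xi>' 1 0 = \<xi>10 \<and> \<xi>' 2 0 = \<xi>20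
          \<longrightarrow> (\<forall>t. \<xi> 1 t = 2 * \<xi>10 * sin (t/2) \<and> \<xi> 2 t = 2 * \<xi>20 * sin (t/2))
            \<and> (\<forall>t. ((\<xi> 1 t)^2 + (\<xi> 2 t)^2) / (\<xi>10^2 + \<xi>20^2) = 4 * (sin (t/2))^2)
            \<and> (\<exists>\<delta>>0. \<forall>t. 0 < t \<and> t < \<delta> \<longrightarrow>
                 ((\<xi> 1 t)^2 + (\<xi> 2 t)^2) / (\<xi>10^2 + \<xi>20^2) < t^2))
     \<and> jacobi_stable (1/2) 1 (-1) x1 x2"
    if P: "(x1, x2) \<in> {(2, 1), (2, -1), (-2, 1), (-2, -1 :: real)}" for x1 x2
  proof -
    have fp: "fixed_point (1/2) 1 (-1) x1 x2" using P fp_iff by blast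
    have G0: "Gf (1/2) 1 (-1) 1 (vec2 x1 x2) zero2 = 0" "Gf (1/2) 1 (-1) 2 (vec2 x1 x2) zero2 = 0"
      using fp by (auto simp: fixed_point_def)
    have G0': "Gf (1/2) 1 (-1) (Suc 0) (vec2 x1 x2) zero2 = 0" using G0 by simp
    have N: "Nc (1/2) 1 (-1) i j (vec2 x1 x2) zero2 = 0" if "i\<in>{1,2}" "j\<in>{1,2}" for i j
      by (rule Nc0) (use that fp in \<open>auto simp: fixed_point_def\<close>)
    have dG: "dGx (1/2) 1 (-1) i j (vec2 x1 x2) zero2 = (if i=j then 1/8 else 0)"
      if "i\<in>{1,2}" "j\<in>{1,2}" for i j
      unfolding dGx_def by (rule pd_eq, rule dGx_D[OF P that])
    have z: "zero2 l = 0" for l by (simp add: zero2_def)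
    have Pv: "Pc (1/2) 1 (-1) i j (vec2 x1 x2) zero2 = (if i = j then -1/4 else 0)"
      if "i\<in>{1,2}" "j\<in>{1,2}" for i j
      unfolding Pc_def using that by (simp add: G0 G0' N dG z)
    have A: "\<forall>i\<in>{1,2}. \<forall>j\<in>{1,2}.
          Nc (1/2) 1 (-1) i j (vec2 x1 x2) zero2 = 0
          \<and> 2 * dGx (1/2) 1 (-1) i j (vec2 x1 x2) zero2 = (if i = j then 1/4 else 0)
          \<and> Pc (1/2) 1 (-1) i j (vec2 x1 x2) zero2 = (if i = j then -1/4 else 0)"
      by (simp add: N dG Pv)
    have J: "jacobi_stable (1/2) 1 (-1) x1 x2"
      unfolding jacobi_stable_def is_eigenvalue2_def
    proof (intro allI impI)
      fix z :: complex
      assume "(complex_of_real (Pc (1/2) 1 (-1) 1 1 (vec2 x1 x2) zero2) - z) *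
         (complex_of_real (Pc (1/2) 1 (-1) 2 2 (vec2 x1 x2) zero2) - z) -
         complex_of_real (Pc (1/2) 1 (-1) 1 2 (vec2 x1 x2) zero2) *
         complex_of_real (Pc (1/2) 1 (-1) 2 1 (vec2 x1 x2) zero2) = 0"
      hence "(complex_of_real (-1/4) - z) * (complex_of_real (-1/4) - z) = 0"
        by (simp add: Pv)
      hence "z = complex_of_real (-1/4)" by simp
      thus "Re z < 0" by simp
    qed
    have B: "(\<forall>t. \<xi> 1 t = 2 * \<xi>10 * sin (t/2) \<and> \<xi> 2 t = 2 * \<xi>20 * sin (t/2))
            \<and> (\<forall>t. ((\<xi> 1 t)^2 + (\<xi> 2 t)^2) / (\<xi>10^2 + \<xi>20^2) = 4 * (sin (t/2))^2)
            \<and> (\<exists>\<delta>>0. \<forall>t. 0 < t \<and> t < \<delta> \<longrightarrow>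
                 ((\<xi> 1 t)^2 + (\<xi> 2 t)^2) / (\<xi>10^2 + \<xi>20^2) < t^2)"
      if H: "(\<xi>10, \<xi>20) \<noteq> (0, 0)
          \<and> (\<forall>i\<in>{1,2}. \<forall>t.
               (\<xi> i has_real_derivative \<xi>' i t) (at t)
             \<and> (\<xi>' i has_real_derivative \<xi>'' i t) (at t)
             \<and> \<xi>'' i t
               + 2 * (\<Sum>j\<in>{1,2}. Nc (1/2) 1 (-1) i j (vec2 x1 x2) zero2 * \<xi>' j t)
               + 2 * (\<Sum>j\<in>{1,2}. dGx (1/2) 1 (-1) i j (vec2 x1 x2) zero2 * \<xi> j t) = 0)
          \<and> \<xi> 1 0 = 0 \<and> \<xi> 2 0 = 0 \<and> \<xi>' 1 0 = \<xi>10 \<and> \<xi>' 2 0 = \<xi>20"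
      for \<xi> :: "nat \<Rightarrow> real \<Rightarrow> real" and \<xi>' \<xi>'' \<xi>10 \<xi>20
    proof -
      have sol: "\<xi> i t = 2 * \<xi>' i 0 * sin (t/2)" if i: "i \<in> {1,2}" for i t
      proof (rule ode_unique[where f'' = "\<xi>'' i"])
        show "(\<xi> i has_real_derivative \<xi>' i t) (at t)" for t using H i by blast
        show "(\<xi>' i has_real_derivative \<xi>'' i t) (at t)" for t using H i by blast
        show "\<xi>'' i t = - \<xi> i t / 4" for t
        proof -
          have "\<xi>'' i t
               + 2 * (\<Sum>j\<in>{1,2}. Nc (1/2) 1 (-1) i j (vec2 x1 x2) zero2 * \<xi>' j t)
               + 2 * (\<Sum>j\<in>{1,2}. dGx (1/2) 1 (-1) i j (vec2 x1 x2) zero2 * \<xi> j t) = 0"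
            using H i by blast
          thus ?thesis using i by (auto simp: N dG)
        qed
        show "\<xi> i 0 = 0" using H i by auto
      qed simp
      have s1: "\<xi> 1 t = 2 * \<xi>10 * sin (t/2)" for t using sol[of 1 t] H by simp
      have s2: "\<xi> 2 t = 2 * \<xi>20 * sin (t/2)" for t using sol[of 2 t] H by simp
      have den: "\<xi>10^2 + \<xi>20^2 > 0" using H
        by (metis add_pos_nonneg add_nonneg_pos zero_le_power2 zero_less_power2 prod.inject)
      have r: "((\<xi> 1 t)^2 + (\<xi> 2 t)^2) / (\<xi>10^2 + \<xi>20^2) = 4 * (sin (t/2))^2" for t
      proof -
        have "(\<xi> 1 t)^2 + (\<xi> 2 t)^2 = (4 * (sin (t/2))^2) * (\<xi>10^2 + \<xi>20^2)"
          unfolding s1 s2 by (simp add: algebra_simps power_mult_distrib)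
        thus ?thesis using den by (metis less_irrefl nonzero_mult_div_cancel_right)
      qed
      show ?thesis
      proof (intro conjI allI)
        show "\<xi> 1 t = 2 * \<xi>10 * sin (t/2)" "\<xi> 2 t = 2 * \<xi>20 * sin (t/2)" for t
          using s1 s2 by auto
        show "((\<xi> 1 t)^2 + (\<xi> 2 t)^2) / (\<xi>10^2 + \<xi>20^2) = 4 * (sin (t/2))^2" for t by (rule r)
        show "\<exists>\<delta>>0. \<forall>t. 0 < t \<and> t < \<delta> \<longrightarrow>
                 ((\<xi> 1 t)^2 + (\<xi> 2 t)^2) / (\<xi>10^2 + \<xi>20^2) < t^2"
        proof (rule exI[of _ 1], intro conjI allI impI)
          fix t :: real assume "0 < t \<and> t < 1"
          thus "((\<xi> 1 t)^2 + (\<xi> 2 t)^2) / (\<xi>10^2 + \<xi>20^2) < t^2"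
            unfolding r using sin_sq_less by blast
        qed simp
      qed
    qed
    show ?thesis using A B J by blast
  qed
  show ?thesis using part2 fp_iff by blast
qed

end
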